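(* Let $\mathcal{A}$ be a finite alphabet and let $\Sigma$ be the set of standard pairs on $\mathcal{A}$ whose rows have the form $a\,w_0\,w_1\,w_2\cdots w_{d-1}\,w_d\,w_{d+1}\,z$ (row 0) and $z\,w_0\,w_d\,w_{d-1}\cdots w_2\,w_1\,w_{d+1}\,a$ (row 1) for some $d\ge0$, letters $a,z$, and words $w_0,\dots,w_{d+1}$ where $w_0$ and $w_{d+1}$ may be empty and $w_1,\dots,w_d$ are nonempty (each $w_i$ appearing identically, not reversed, in both rows). Then $\Sigma$ is closed under inner switch moves and outer switch moves (whenever the move is defined). Moreover, if some $\mathbf{p}\in\Sigma$ has a Type, then it is of Type $\langle1\rangle$.
   Context: Let $n=\#\mathcal{A}\ge2$. A pair is $\mathbf{p}=(p_0,p_1)$ with $p_0,p_1:\mathcal{A}\to\{1,\dots,n\}$ bijections, displayed by rows (row $\varepsilon$ lists $p_\varepsilon^{-1}(1),\dots,p_\varepsilon^{-1}(n)$); words are ordered collections of distinct letters. Standard: $p_0^{-1}(1)=p_1^{-1}(n)$ and $p_1^{-1}(1)=p_0^{-1}(n)$. Inner switch: for standard $\mathbf{p}$ with rows $a\,u_1\,b\,u_2\,c\,u_3\,z$ and $z\,u_4\,b\,u_5\,c\,u_6\,a$ (letters $b,c$, possibly empty words $u_i$), the $\{b,c\}$-switch gives rows $a\,u_2\,c\,u_1\,b\,u_3\,z$ and $z\,u_5\,c\,u_4\,b\,u_6\,a$. Outer switches: for standard $\mathbf{p}$ with rows $a\,u_1\,b\,u_2\,z$ and $z\,u_3\,b\,u_4\,a$,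 the $\{a,b\}$-switch gives rows $b\,u_2\,a\,u_1\,z$ and $z\,u_4\,a\,u_3\,b$, and the $\{b,z\}$-switch gives rows $a\,u_2\,z\,u_1\,b$ and $b\,u_4\,z\,u_3\,a$. A standard pair is piece-wise order reversing if there are $2=k_0<\dots<k_\ell=n$ with $B_i=p_0^{-1}\{k_{i-1},\dots,k_i-1\}=p_1^{-1}\{k_{i-1},\dots,k_i-1\}$ and $p_0(b)+p_1(b)=k_{i-1}+k_i-1$ for $b\in B_i$; the $B_i$ are blocks ($k$-block: $k$ letters). Chains: with the $1$-blocks $S_1,\dots,S_{k-1}$ listed left to right, chain $C_i$ is the possibly empty sequence of consecutive blocks strictly between $S_{i-1}$ and $S_i$ ($C_1$ before $S_1$, $C_k$ after $S_{k-1}$). Only piece-wise order reversing pairs have a Type. Types: $\langle1\rangle$: at most one nonempty chain, consisting (if present) of one block. Types $\langle2\rangle$–$\langle5\rangle$ require more than one block of size $\ge2$, and: $\langle2\rangle$: all nonempty chains consist of $2$-blocks; $\langle3\rangle$: each nonempty chain is (i) $m$ $2$-blocks, a $3$-block, $\ell$ $2$-blocks ($m,\ell\ge0$) or (ii) $m\ge1$ $2$-blocks, with at least one chain of form (i); $\langle4\rangle$: exactly one chain is a $4$-block followed by $m\ge0$ $2$-blocks, other nonempty chains consist of $2$-blocks; $\langle5\rangle$: exactly one chain is a single $5$-block, every other nonempty chain is exactly one $2$-block. *)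

theory Defs
  imports Main
begin

text \<open>A pair over the alphabet A is represented by its two rows (row 0, row 1),
  each a list of the letters of A, listed in order of position 1,...,n.\<close>

type_synonym 'a pair = "'a list \<times> 'a list"

definition valid_pair :: "'a set \<Rightarrow> 'a pair \<Rightarrow> bool" where
  "valid_pair A p \<longleftrightarrow> distinct (fst p) \<and> distinct (snd p) \<and> set (fst p) = A \<and> set (snd p) = A"

definition pos :: "'a list \<Rightarrow> 'a \<Rightarrow> nat" where
  "pos r b = Suc (THE i. i < length r \<and> r ! i = b)"

definition standard :: "'a pair \<Rightarrow> bool" where
  "standard p \<longleftrightarrow> fst p \<noteq> [] \<and> snd p \<noteq> [] \<and>
     hd (fst p) = last (snd p) \<and> hd (snd p) = last (fst p)"

definition inner_switch :: "'a pair \<Rightarrow> 'a pair \<Rightarrow> bool" where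
  "inner_switch p q \<longleftrightarrow> standard p \<and>
     (\<exists>a b c z u1 u2 u3 u4 u5 u6.
        p = (a # u1 @ b # u2 @ c # u3 @ [z], z # u4 @ b # u5 @ c # u6 @ [a]) \<and>
        q = (a # u2 @ c # u1 @ b # u3 @ [z], z # u5 @ c # u4 @ b # u6 @ [a]))"

definition outer_switch_ab :: "'a pair \<Rightarrow> 'a pair \<Rightarrow> bool" where
  "outer_switch_ab p q \<longleftrightarrow> standard p \<and>
     (\<exists>a b z u1 u2 u3 u4.
        p = (a # u1 @ b # u2 @ [z], z # u3 @ b # u4 @ [a]) \<and>
        q = (b # u2 @ a # u1 @ [z], z # u4 @ a # u3 @ [b]))"

definition outer_switch_bz :: "'a pair \<Rightarrow> 'a pair \<Rightarrow> bool" where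
  "outer_switch_bz p q \<longleftrightarrow> standard p \<and>
     (\<exists>a b z u1 u2 u3 u4.
        p = (a # u1 @ b # u2 @ [z], z # u3 @ b # u4 @ [a]) \<and>
        q = (a # u2 @ z # u1 @ [b], b # u4 @ z # u3 @ [a]))"

definition Sigma_set :: "'a set \<Rightarrow> 'a pair set" where
  "Sigma_set A = {p. valid_pair A p \<and> standard p \<and>
     (\<exists>a z w0 wl mid. (\<forall>w\<in>set mid. w \<noteq> []) \<and>
        fst p = a # w0 @ concat mid @ wl @ [z] \<and>
        snd p = z # w0 @ concat (rev mid) @ wl @ [a])}"

definition por_witness :: "'a pair \<Rightarrow> nat list \<Rightarrow> bool" where
  "por_witness p ks \<longleftrightarrow> standard p \<and> ks \<noteq> [] \<and> sorted_wrt (<) ks \<and>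
     hd ks = 2 \<and> last ks = length (fst p) \<and>
     (\<forall>i. 0 < i \<and> i < length ks \<longrightarrow>
        {b \<in> set (fst p). ks!(i-1) \<le> pos (fst p) b \<and> pos (fst p) b < ks!i}
          = {b \<in> set (snd p). ks!(i-1) \<le> pos (snd p) b \<and> pos (snd p) b < ks!i} \<and>
        (\<forall>b \<in> set (fst p). ks!(i-1) \<le> pos (fst p) b \<and> pos (fst p) b < ks!i \<longrightarrow>
            pos (fst p) b + pos (snd p) b = ks!(i-1) + ks!i - 1))"

definition piecewise_order_reversing :: "'a pair \<Rightarrow> bool" where
  "piecewise_order_reversing p \<longleftrightarrow> (\<exists>ks. por_witness p ks)"

definition block_sizes :: "nat list \<Rightarrow> nat list" where
  "block_sizes ks = map (\<lambda>i. ks!(Suc i) - ks!i) [0..<length ks - 1]"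

text \<open>Chains: split the block sequence at the 1-blocks (k-1 one-blocks give k chains).\<close>
fun chains :: "nat list \<Rightarrow> nat list list" where
  "chains [] = [[]]"
| "chains (x # xs) = (if x = 1 then [] # chains xs
                      else (let cs = chains xs in (x # hd cs) # tl cs))"

definition type1 :: "nat list \<Rightarrow> bool" where
  "type1 bs \<longleftrightarrow> length (filter (\<lambda>c. c \<noteq> []) (chains bs)) \<le> 1 \<and>
     (\<forall>c \<in> set (chains bs). length c \<le> 1)"

definition many_big :: "nat list \<Rightarrow> bool" where
  "many_big bs \<longleftrightarrow> length (filter (\<lambda>s. 2 \<le> s) bs) > 1"

definition type2 :: "nat list \<Rightarrow> bool" where
  "type2 bs \<longleftrightarrow> many_big bs \<and> (\<forall>c \<in> set (chains bs). \<forall>s \<in> set c. s = 2)"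

definition form3i :: "nat list \<Rightarrow> bool" where
  "form3i c \<longleftrightarrow> (\<exists>m l. c = replicate m 2 @ [3] @ replicate l 2)"

definition form3ii :: "nat list \<Rightarrow> bool" where
  "form3ii c \<longleftrightarrow> (\<exists>m. m \<ge> 1 \<and> c = replicate m 2)"

definition type3 :: "nat list \<Rightarrow> bool" where
  "type3 bs \<longleftrightarrow> many_big bs \<and>
     (\<forall>c \<in> set (chains bs). c \<noteq> [] \<longrightarrow> form3i c \<or> form3ii c) \<and>
     (\<exists>c \<in> set (chains bs). form3i c)"

definition form4 :: "nat list \<Rightarrow> bool" where
  "form4 c \<longleftrightarrow> (\<exists>m. c = 4 # replicate m 2)"

definition type4 :: "nat list \<Rightarrow> bool" where
  "type4 bs \<longleftrightarrow> many_big bs \<and>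
     length (filter form4 (chains bs)) = 1 \<and>
     (\<forall>c \<in> set (chains bs). \<not> form4 c \<longrightarrow> (\<forall>s \<in> set c. s = 2))"

definition type5 :: "nat list \<Rightarrow> bool" where
  "type5 bs \<longleftrightarrow> many_big bs \<and>
     length (filter (\<lambda>c. c = [5]) (chains bs)) = 1 \<and>
     (\<forall>c \<in> set (chains bs). c \<noteq> [] \<and> c \<noteq> [5] \<longrightarrow> c = [2])"

definition has_type :: "nat \<Rightarrow> 'a pair \<Rightarrow> bool" where
  "has_type t p \<longleftrightarrow> (\<exists>ks. por_witness p ks \<and>
     (let bs = block_sizes ks in
       (t = 1 \<and> type1 bs) \<or> (t = 2 \<and> type2 bs) \<or> (t = 3 \<and> type3 bs) \<or>
       (t = 4 \<and> type4 bs) \<or> (t = 5 \<and> type5 bs)))"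

end

theory Submission
  imports Defs
begin


lemma split_uniq:
  "u @ b # v = u' @ b # v' \<Longrightarrow> b \<notin> set u \<Longrightarrow> b \<notin> set u' \<Longrightarrow> u = u' \<and> v = v'"
proof (induction u arbitrary: u')
  case Nil then show ?case by (cases u') auto
next
  case (Cons x u) then show ?case by (cases u') auto
qed

definition SigM :: "'a list \<Rightarrow> 'a list \<Rightarrow> bool" where
  "SigM X Y \<longleftrightarrow> (\<exists>w0 wl mid. (\<forall>w\<in>set mid. w \<noteq> []) \<and>
      X = w0 @ concat mid @ wl \<and> Y = w0 @ concat (rev mid) @ wl)"

lemma locate:
  assumes "b \<in> set (w0 @ concat mid @ wl)"
  obtains (A) al be where "w0 = al @ b # be"
   | (B) m1 w m2 ga de where "mid = m1 @ w # m2" "w = ga @ b # de"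
   | (C) al be where "wl = al @ b # be"
proof -
  consider "b \<in> set w0" | "b \<in> set (concat mid)" | "b \<in> set wl" using assms by auto
  then show thesis
  proof cases
    case 1 then show ?thesis using A split_list by metis
  next
    case 2
    then obtain w where w: "w \<in> set mid" "b \<in> set w" by auto
    then obtain m1 m2 where "mid = m1 @ w # m2" using split_list by metis
    moreover obtain ga de where "w = ga @ b # de" using w split_list by metis
    ultimately show ?thesis using B by blast
  next
    case 3 then show ?thesis using C split_list by metis
  qed
qed

lemma dist_perm: "set xs = set ys \<Longrightarrow> length xs = length ys \<Longrightarrow> distinct xs \<Longrightarrow> distinct ys"
  by (metis card_distinct distinct_card)

lemma len_concat_rev: "length (concat (rev mid)) = length (concat mid)"
  by (induction mid) auto

lemma su: "distinct (u @ b # v) \<Longrightarrow> u @ b # v = u' @ b # v' \<Longrightarrow> u = u' \<and> v = v'"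
proof -
  assume d: "distinct (u @ b # v)" and e: "u @ b # v = u' @ b # v'"
  then have "distinct (u' @ b # v')" by simp
  moreover have "b \<notin> set u" using d by simp
  ultimately show ?thesis using e split_uniq[of u b v u' v'] by simp
qed

lemma outer_core:
  assumes S: "SigM (u1 @ b # u2) (u3 @ b # u4)" and dX: "distinct (u1 @ b # u2)"
  shows "SigM (u2 @ a # u1) (u4 @ a # u3)"
proof -
  obtain w0 wl mid where ne: "\<forall>w\<in>set mid. w \<noteq> []" and
    X: "u1 @ b # u2 = w0 @ concat mid @ wl" and Y: "u3 @ b # u4 = w0 @ concat (rev mid) @ wl"
    using S unfolding SigM_def by blast
  have dY: "distinct (u3 @ b # u4)"
  proof -
    have "set (u3 @ b # u4) = set (u1 @ b # u2)" "length (u1 @ b # u2) = length (u3 @ b # u4)"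
      using X Y by (simp_all only: len_concat_rev length_append set_append set_concat set_rev)
    then show ?thesis using dX dist_perm by metis
  qed
  have "b \<in> set (w0 @ concat mid @ wl)" using X[symmetric] by simp
  then show ?thesis
  proof (cases rule: locate)
    case (A al be)
    have 1: "u1 = al \<and> u2 = be @ concat mid @ wl" using su[OF dX] X A by simp
    have 2: "u3 = al \<and> u4 = be @ concat (rev mid) @ wl" using su[OF dY] Y A by simp
    show ?thesis unfolding SigM_def
      apply (rule exI[of _ be], rule exI[of _ "wl @ a # al"], rule exI[of _ mid]) using 1 2 ne by simp
  next
    case (B m1 w m2 ga de)
    have 1: "u1 = w0 @ concat m1 @ ga \<and> u2 = de @ concat m2 @ wl" using su[OF dX] X B by simp
    have 2: "u3 = w0 @ concat (rev m2) @ ga \<and> u4 = de @ concat (rev m1) @ wl" using su[OF dY] Y B by simp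
    show ?thesis unfolding SigM_def
      apply (rule exI[of _ de], rule exI[of _ ga], rule exI[of _ "m2 @ [wl @ a # w0] @ m1"])
      using 1 2 ne B by auto
  next
    case (C al be)
    have 1: "u1 = w0 @ concat mid @ al \<and> u2 = be" using su[OF dX] X C by simp
    have 2: "u3 = w0 @ concat (rev mid) @ al \<and> u4 = be" using su[OF dY] Y C by simp
    show ?thesis unfolding SigM_def
      apply (rule exI[of _ "be @ a # w0"], rule exI[of _ al], rule exI[of _ mid]) using 1 2 ne by simp
  qed
qed
lemma inner_core:
  assumes S: "SigM (u1 @ b # u2 @ c # u3) (u4 @ b # u5 @ c # u6)"
    and dX: "distinct (u1 @ b # u2 @ c # u3)"
  shows "SigM (u2 @ c # u1 @ b # u3) (u5 @ c # u4 @ b # u6)"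
proof -
  obtain w0 wl mid where ne: "\<forall>w\<in>set mid. w \<noteq> []" and
    X: "u1 @ b # u2 @ c # u3 = w0 @ concat mid @ wl" and
    Y: "u4 @ b # u5 @ c # u6 = w0 @ concat (rev mid) @ wl"
    using S unfolding SigM_def by blast
  have dY: "distinct (u4 @ b # u5 @ c # u6)"
  proof -
    have "set (u4 @ b # u5 @ c # u6) = set (u1 @ b # u2 @ c # u3)"
      "length (u1 @ b # u2 @ c # u3) = length (u4 @ b # u5 @ c # u6)"
      using X Y by (simp_all only: len_concat_rev length_append set_append set_concat set_rev)
    then show ?thesis using dX dist_perm by metis
  qed
  have dX2: "distinct (u2 @ c # u3)" using dX by simp
  have dY2: "distinct (u5 @ c # u6)" using dY by simp
  have cu4: "c \<notin> set u4" using dY by auto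
  have "b \<in> set (w0 @ concat mid @ wl)" using X[symmetric] by simp
  then show ?thesis
  proof (cases rule: locate)
    case (A al be)
    have 1: "u1 = al \<and> u2 @ c # u3 = be @ concat mid @ wl" using su[OF dX] X A by simp
    have 2: "u4 = al \<and> u5 @ c # u6 = be @ concat (rev mid) @ wl" using su[OF dY] Y A by simp
    have "c \<in> set (be @ concat mid @ wl)" using 1 by (metis in_set_conv_decomp)
    then show ?thesis
    proof (cases rule: locate)
      case (A p q)
      have 3: "u2 = p \<and> u3 = q @ concat mid @ wl" using su[OF dX2] 1 A by simp
      have 4: "u5 = p \<and> u6 = q @ concat (rev mid) @ wl" using su[OF dY2] 2 A by simp
      show ?thesis unfolding SigM_def
        apply (rule exI[of _ "p @ c # al @ b # q"], rule exI[of _ wl], rule exI[of _ mid])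
        using 1 2 3 4 ne by simp
    next
      case (B m1 w m2 ga de)
      have 3: "u2 = be @ concat m1 @ ga \<and> u3 = de @ concat m2 @ wl" using su[OF dX2] 1 B by simp
      have 4: "u5 = be @ concat (rev m2) @ ga \<and> u6 = de @ concat (rev m1) @ wl" using su[OF dY2] 2 B by simp
      show ?thesis unfolding SigM_def
        apply (rule exI[of _ be], rule exI[of _ wl], rule exI[of _ "m1 @ [ga @ c # al @ b # de] @ m2"])
        using 1 2 3 4 ne B by auto
    next
      case (C p q)
      have 3: "u2 = be @ concat mid @ p \<and> u3 = q" using su[OF dX2] 1 C by simp
      have 4: "u5 = be @ concat (rev mid) @ p \<and> u6 = q" using su[OF dY2] 2 C by simp
      show ?thesis unfolding SigM_def
        apply (rule exI[of _ be], rule exI[of _ "p @ c # al @ b # q"], rule exI[of _ mid])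
        using 1 2 3 4 ne by simp
    qed
  next
    case (B m1 w m2 ga de)
    have 1: "u1 = w0 @ concat m1 @ ga \<and> u2 @ c # u3 = de @ concat m2 @ wl" using su[OF dX] X B by simp
    have 2: "u4 = w0 @ concat (rev m2) @ ga \<and> u5 @ c # u6 = de @ concat (rev m1) @ wl" using su[OF dY] Y B by simp
    have "c \<in> set (de @ concat m2 @ wl)" using 1 by (metis in_set_conv_decomp)
    then show ?thesis
    proof (cases rule: locate)
      case (A p q)
      have 3: "u2 = p \<and> u3 = q @ concat m2 @ wl" using su[OF dX2] 1 A by simp
      have 4: "u5 = p \<and> u6 = q @ concat (rev m1) @ wl" using su[OF dY2] 2 A by simp
      show ?thesis unfolding SigM_def
        apply (rule exI[of _ "p @ c # w0"], rule exI[of _ wl], rule exI[of _ "m1 @ [ga @ b # q] @ m2"])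
        using 1 2 3 4 ne B by auto
    next
      case (B n1 v n2 p q)
      then have "c \<in> set u4" using 2 by auto
      then show ?thesis using cu4 by simp
    next
      case (C p q)
      have 3: "u2 = de @ concat m2 @ p \<and> u3 = q" using su[OF dX2] 1 C by simp
      have 4: "u5 = de @ concat (rev m1) @ p \<and> u6 = q" using su[OF dY2] 2 C by simp
      show ?thesis unfolding SigM_def
        apply (rule exI[of _ de], rule exI[of _ "ga @ b # q"], rule exI[of _ "m2 @ [p @ c # w0] @ m1"])
        using 1 2 3 4 ne B by auto
    qed
  next
    case (C al be)
    have 1: "u1 = w0 @ concat mid @ al \<and> u2 @ c # u3 = be" using su[OF dX] X C by simp
    have 2: "u4 = w0 @ concat (rev mid) @ al \<and> u5 @ c # u6 = be" using su[OF dY] Y C by simp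
    have 3: "u2 = u5 \<and> u3 = u6" using su[OF dX2, of u5 u6] 1 2 by simp
    show ?thesis unfolding SigM_def
      apply (rule exI[of _ "u2 @ c # w0"], rule exI[of _ "al @ b # u3"], rule exI[of _ mid])
      using 1 2 3 ne by simp
  qed
qed

lemma sigma_iff:
  "p \<in> Sigma_set A \<longleftrightarrow> valid_pair A p \<and> (\<exists>a z X Y. p = (a # X @ [z], z # Y @ [a]) \<and> SigM X Y)"
proof
  assume "p \<in> Sigma_set A"
  then obtain a z w0 wl mid where v: "valid_pair A p" and ne: "\<forall>w\<in>set mid. w \<noteq> []" and
    f: "fst p = a # w0 @ concat mid @ wl @ [z]" and s: "snd p = z # w0 @ concat (rev mid) @ wl @ [a]"
    unfolding Sigma_set_def by blast
  have "p = (a # (w0 @ concat mid @ wl) @ [z], z # (w0 @ concat (rev mid) @ wl) @ [a])"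
    using f s by (cases p) simp
  moreover have "SigM (w0 @ concat mid @ wl) (w0 @ concat (rev mid) @ wl)"
    unfolding SigM_def using ne by blast
  ultimately show "valid_pair A p \<and> (\<exists>a z X Y. p = (a # X @ [z], z # Y @ [a]) \<and> SigM X Y)"
    using v by blast
next
  assume "valid_pair A p \<and> (\<exists>a z X Y. p = (a # X @ [z], z # Y @ [a]) \<and> SigM X Y)"
  then obtain a z X Y where v: "valid_pair A p" and p: "p = (a # X @ [z], z # Y @ [a])" and S: "SigM X Y"
    by blast
  obtain w0 wl mid where ne: "\<forall>w\<in>set mid. w \<noteq> []" and
    X: "X = w0 @ concat mid @ wl" and Y: "Y = w0 @ concat (rev mid) @ wl"
    using S unfolding SigM_def by blast
  have "standard p" using p unfolding standard_def by simp
  then show "p \<in> Sigma_set A" unfolding Sigma_set_def using v ne p X Y by auto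
qed

lemma valid_perm:
  assumes "valid_pair A p" "set (fst q) = set (fst p)" "set (snd q) = set (snd p)"
    "length (fst q) = length (fst p)" "length (snd q) = length (snd p)"
  shows "valid_pair A q"
  using assms dist_perm unfolding valid_pair_def by metis

lemma inner_closed:
  assumes "p \<in> Sigma_set A" "inner_switch p q"
  shows "q \<in> Sigma_set A"
proof -
  obtain a z X Y where p: "p = (a # X @ [z], z # Y @ [a])" and S: "SigM X Y" and v: "valid_pair A p"
    using assms(1) sigma_iff by metis
  obtain a' b c z' u1 u2 u3 u4 u5 u6 where
    p': "p = (a' # u1 @ b # u2 @ c # u3 @ [z'], z' # u4 @ b # u5 @ c # u6 @ [a'])" and
    q: "q = (a' # u2 @ c # u1 @ b # u3 @ [z'], z' # u5 @ c # u4 @ b # u6 @ [a'])"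
    using assms(2) unfolding inner_switch_def by blast
  have e: "a' = a" "z' = z" "X = u1 @ b # u2 @ c # u3" "Y = u4 @ b # u5 @ c # u6"
    using p p' by auto
  have dX: "distinct X" using v p unfolding valid_pair_def by simp
  have "SigM (u2 @ c # u1 @ b # u3) (u5 @ c # u4 @ b # u6)"
    using inner_core[of u1 b u2 c u3 u4 u5 u6] S dX e by simp
  moreover have "valid_pair A q"
    by (rule valid_perm[OF v]) (auto simp: p q e)
  moreover have "q = (a # (u2 @ c # u1 @ b # u3) @ [z], z # (u5 @ c # u4 @ b # u6) @ [a])"
    using q e by simp
  ultimately show ?thesis unfolding sigma_iff by blast
qed

lemma outer_ab_closed:
  assumes "p \<in> Sigma_set A" "outer_switch_ab p q"
  shows "q \<in> Sigma_set A"
proof -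
  obtain a z X Y where p: "p = (a # X @ [z], z # Y @ [a])" and S: "SigM X Y" and v: "valid_pair A p"
    using assms(1) sigma_iff by metis
  obtain a' b z' u1 u2 u3 u4 where
    p': "p = (a' # u1 @ b # u2 @ [z'], z' # u3 @ b # u4 @ [a'])" and
    q: "q = (b # u2 @ a' # u1 @ [z'], z' # u4 @ a' # u3 @ [b])"
    using assms(2) unfolding outer_switch_ab_def by blast
  have e: "a' = a" "z' = z" "X = u1 @ b # u2" "Y = u3 @ b # u4"
    using p p' by auto
  have dX: "distinct X" using v p unfolding valid_pair_def by simp
  have "SigM (u2 @ a # u1) (u4 @ a # u3)"
    using outer_core[of u1 b u2 u3 u4 a] S dX e by simp
  moreover have "valid_pair A q"
    by (rule valid_perm[OF v]) (auto simp: p q e)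
  moreover have "q = (b # (u2 @ a # u1) @ [z], z # (u4 @ a # u3) @ [b])"
    using q e by simp
  ultimately show ?thesis unfolding sigma_iff by blast
qed

lemma outer_bz_closed:
  assumes "p \<in> Sigma_set A" "outer_switch_bz p q"
  shows "q \<in> Sigma_set A"
proof -
  obtain a z X Y where p: "p = (a # X @ [z], z # Y @ [a])" and S: "SigM X Y" and v: "valid_pair A p"
    using assms(1) sigma_iff by metis
  obtain a' b z' u1 u2 u3 u4 where
    p': "p = (a' # u1 @ b # u2 @ [z'], z' # u3 @ b # u4 @ [a'])" and
    q: "q = (a' # u2 @ z' # u1 @ [b], b # u4 @ z' # u3 @ [a'])"
    using assms(2) unfolding outer_switch_bz_def by blast
  have e: "a' = a" "z' = z" "X = u1 @ b # u2" "Y = u3 @ b # u4"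
    using p p' by auto
  have dX: "distinct X" using v p unfolding valid_pair_def by simp
  have "SigM (u2 @ z # u1) (u4 @ z # u3)"
    using outer_core[of u1 b u2 u3 u4 z] S dX e by simp
  moreover have "valid_pair A q"
    by (rule valid_perm[OF v]) (auto simp: p q e)
  moreover have "q = (a # (u2 @ z # u1) @ [b], b # (u4 @ z # u3) @ [a])"
    using q e by simp
  ultimately show ?thesis unfolding sigma_iff by blast
qed



lemma chains_ne: "chains bs \<noteq> []"
  by (induction bs) (auto simp: Let_def)

lemma concat_chains: "concat (chains bs) = filter (\<lambda>x. x \<noteq> 1) bs"
proof (induction bs)
  case Nil then show ?case by simp
next
  case (Cons x xs)
  have "chains xs = hd (chains xs) # tl (chains xs)" using chains_ne by simp
  then have "concat (chains xs) = hd (chains xs) @ concat (tl (chains xs))" by (metis concat.simps(2))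
  then show ?case using Cons by (auto simp: Let_def)
qed

lemma count_nonempty: "length (filter (\<lambda>c. c \<noteq> []) cs) \<le> length (concat cs)"
  by (induction cs) (auto simp: neq_Nil_conv)

lemma elem_len: "c \<in> set cs \<Longrightarrow> length c \<le> length (concat cs)"
  by (induction cs) auto

lemma type1I: "length (filter (\<lambda>x. x \<noteq> 1) bs) \<le> 1 \<Longrightarrow> type1 bs"
  unfolding type1_def
  using count_nonempty[of "chains bs"] elem_len[of _ "chains bs"] concat_chains[of bs]
  by (metis le_trans)

definition before :: "'a list \<Rightarrow> 'a \<Rightarrow> 'a \<Rightarrow> bool" where
  "before r x y \<longleftrightarrow> (\<exists>u v w. r = u @ x # v @ y # w)"

lemma before_set: "before r x y \<Longrightarrow> x \<in> set r \<and> y \<in> set r"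
  unfolding before_def by auto

lemma before_appI1: "before u x y \<Longrightarrow> before (u @ v) x y"
  unfolding before_def by force

lemma before_appI2: "before v x y \<Longrightarrow> before (u @ v) x y"
  unfolding before_def by (metis append.assoc)

lemma before_appI3: "x \<in> set u \<Longrightarrow> y \<in> set v \<Longrightarrow> before (u @ v) x y"
  unfolding before_def by (metis append.assoc append_Cons split_list)

lemma before_appD: "before (u @ v) x y \<Longrightarrow> before u x y \<or> before v x y \<or> (x \<in> set u \<and> y \<in> set v)"
proof -
  assume "before (u @ v) x y"
  then obtain p q w where e: "u @ v = p @ x # q @ y # w" unfolding before_def by blast
  then obtain us where "(u = p @ us \<and> us @ v = x # q @ y # w) \<or> (u @ us = p \<and> v = us @ x # q @ y # w)"
    by (auto simp: append_eq_append_conv2)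
  then show ?thesis
  proof
    assume "u @ us = p \<and> v = us @ x # q @ y # w"
    then show ?thesis unfolding before_def by blast
  next
    assume h: "u = p @ us \<and> us @ v = x # q @ y # w"
    show ?thesis
    proof (cases us)
      case Nil then show ?thesis using h unfolding before_def by (metis append_Nil)
    next
      case (Cons x' us')
      then have xu: "x \<in> set u" "us' @ v = q @ y # w" using h by auto
      then obtain t where "(us' = q @ t \<and> t @ v = y # w) \<or> (us' @ t = q \<and> v = t @ y # w)"
        by (auto simp: append_eq_append_conv2)
      then show ?thesis
      proof
        assume h2: "us' = q @ t \<and> t @ v = y # w"
        show ?thesis
        proof (cases t)
          case Nil then show ?thesis using h2 xu by auto
        next
          case (Cons y' t')
          then have "u = p @ x # q @ y # t'" using h h2 \<open>us = x' # us'\<close> by auto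
          then show ?thesis unfolding before_def by blast
        qed
      next
        assume "us' @ t = q \<and> v = t @ y # w"
        then show ?thesis using xu by auto
      qed
    qed
  qed
qed

lemma before_neq: "distinct r \<Longrightarrow> before r x y \<Longrightarrow> x \<noteq> y"
  unfolding before_def by auto

lemma before_asym: "distinct r \<Longrightarrow> before r x y \<Longrightarrow> \<not> before r y x"
proof
  assume d: "distinct r" and b1: "before r x y" and b2: "before r y x"
  obtain u v w where e1: "r = u @ x # (v @ y # w)" using b1 unfolding before_def by auto
  obtain u' v' w' where e2: "r = (u' @ y # v') @ x # w'" using b2 unfolding before_def by auto
  have d1: "distinct (u @ x # (v @ y # w))" using d e1 by simp
  have eq: "u @ x # (v @ y # w) = (u' @ y # v') @ x # w'" using e1 e2 by simp
  have "u = u' @ y # v'" using su[OF d1 eq] by simp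
  then show False using d1 by simp
qed

lemma before_total: "distinct r \<Longrightarrow> x \<in> set r \<Longrightarrow> y \<in> set r \<Longrightarrow> x \<noteq> y \<Longrightarrow> before r x y \<or> before r y x"
proof -
  assume "x \<in> set r" "y \<in> set r" "x \<noteq> y"
  then obtain u v where e: "r = u @ x # v" by (metis split_list)
  then have "y \<in> set u \<or> y \<in> set v" using \<open>y \<in> set r\<close> \<open>x \<noteq> y\<close> by auto
  then show ?thesis
  proof
    assume "y \<in> set u"
    then have "before (u @ [x]) y x" using before_appI3[of y u x "[x]"] by simp
    then have "before ((u @ [x]) @ v) y x" by (rule before_appI1)
    then show ?thesis using e by simp
  next
    assume "y \<in> set v"
    then obtain v1 v2 where "v = v1 @ y # v2" by (metis split_list)
    then show ?thesis using e unfolding before_def by blast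
  qed
qed

lemma before_M: "distinct (u @ v) \<Longrightarrow> before (u @ v) x y \<Longrightarrow> x \<in> set v \<Longrightarrow> y \<in> set v"
proof -
  assume h: "distinct (u @ v)" "before (u @ v) x y" "x \<in> set v"
  then have n: "x \<notin> set u" by auto
  from before_appD[OF h(2)] show ?thesis
  proof (elim disjE)
    assume "before u x y" then show ?thesis using n before_set by metis
  next
    assume "before v x y" then show ?thesis using before_set by metis
  qed (use n in simp)
qed

lemma before_R: "distinct (u @ v @ w) \<Longrightarrow> before (u @ v @ w) x y \<Longrightarrow> x \<in> set v \<Longrightarrow> y \<in> set v
  \<Longrightarrow> before v x y"
proof -
  assume h: "distinct (u @ v @ w)" "before (u @ v @ w) x y" "x \<in> set v" "y \<in> set v"
  then have n: "x \<notin> set u" "y \<notin> set w" "x \<notin> set w" by auto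
  have "before (v @ w) x y"
    using before_appD[OF h(2)] proof (elim disjE)
    assume "before u x y" then show ?thesis using n before_set by metis
  qed (use n in simp_all)
  from before_appD[OF this] show ?thesis
  proof (elim disjE)
    assume "before w x y" then show ?thesis using n before_set by metis
  qed (use n in simp_all)
qed

lemma concat_split: "i < length L \<Longrightarrow> concat L = concat (take i L) @ L ! i @ concat (drop (Suc i) L)"
  by (metis append_take_drop_id concat.simps(2) concat_append Cons_nth_drop_Suc)

lemma S3: "i < j \<Longrightarrow> j < length L \<Longrightarrow> x \<in> set (L ! i) \<Longrightarrow> y \<in> set (L ! j) \<Longrightarrow> before (concat L) x y"
proof -
  assume h: "i < j" "j < length L" "x \<in> set (L ! i)" "y \<in> set (L ! j)"
  have "L ! i \<in> set (take j L)" using h by (auto simp: in_set_conv_nth intro!: exI[of _ i])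
  then have "x \<in> set (concat (take j L))" using h by auto
  moreover have "L ! j \<in> set (drop j L)" using Cons_nth_drop_Suc[OF h(2), symmetric] by (metis list.set_intros(1))
  then have "y \<in> set (concat (drop j L))" using h by auto
  ultimately show ?thesis using before_appI3 by (metis append_take_drop_id concat_append)
qed

lemma S4: "i < length L \<Longrightarrow> before (L ! i) x y \<Longrightarrow> before (concat L) x y"
  using concat_split before_appI1 before_appI2 by metis

lemma S1: "distinct (concat L) \<Longrightarrow> i < length L \<Longrightarrow> j < length L \<Longrightarrow> x \<in> set (L ! i) \<Longrightarrow> x \<in> set (L ! j) \<Longrightarrow> i = j"
  by (metis S3 before_neq linorder_neqE_nat)

lemma S2: "distinct (concat L) \<Longrightarrow> before (concat L) x y \<Longrightarrow> i < length L \<Longrightarrow> j < length L \<Longrightarrow>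
   x \<in> set (L ! i) \<Longrightarrow> y \<in> set (L ! j) \<Longrightarrow> i \<le> j"
  by (meson S3 before_asym not_le)

lemma S5: "distinct (concat L) \<Longrightarrow> before (concat L) x y \<Longrightarrow> i < length L \<Longrightarrow>
   x \<in> set (L ! i) \<Longrightarrow> y \<in> set (L ! i) \<Longrightarrow> before (L ! i) x y"
proof -
  assume h: "distinct (concat L)" "before (concat L) x y" "i < length L" "x \<in> set (L ! i)" "y \<in> set (L ! i)"
  have "distinct (L ! i)" using h concat_split by (metis distinct_append)
  moreover have "x \<noteq> y" using h before_neq by metis
  ultimately have "before (L ! i) x y \<or> before (L ! i) y x" using before_total h by metis
  then show ?thesis using S4 before_asym h by metis
qed

lemma inv_in_C:
  assumes dX: "distinct (w0 @ C @ wl)" and dY: "distinct (w0 @ C' @ wl)" and sC: "set C' = set C"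
    and b1: "before (w0 @ C @ wl) x y" and b2: "before (w0 @ C' @ wl) y x"
  shows "x \<in> set C \<and> y \<in> set C \<and> before C x y \<and> before C' y x"
proof -
  have xs: "x \<in> set (w0 @ C @ wl)" "y \<in> set (w0 @ C @ wl)" using before_set[OF b1] by auto
  have dw0: "distinct w0" "distinct wl" using dX by auto
  consider "x \<in> set wl" | "x \<in> set w0" | "x \<in> set C" using xs by auto
  then show ?thesis
  proof cases
    case 1
    have b1': "before ((w0 @ C) @ wl @ []) x y" using b1 by simp
    have b2': "before ((w0 @ C') @ wl @ []) y x" using b2 by simp
    have "y \<in> set wl" using before_M[of "w0 @ C" wl x y] b1 dX 1 by simp
    then have "before wl x y" "before wl y x"
      using before_R[OF _ b1'] before_R[OF _ b2'] dX dY 1 by auto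
    then show ?thesis using before_asym dw0 by metis
  next
    case 2
    have "y \<notin> set (C' @ wl)"
    proof
      assume "y \<in> set (C' @ wl)"
      then have "x \<in> set (C' @ wl)" using before_M[of w0 "C' @ wl" y x] b2 dY by simp
      then show False using 2 dY by auto
    qed
    then have y0: "y \<in> set w0" using xs sC by auto
    have b1': "before ([] @ w0 @ (C @ wl)) x y" using b1 by simp
    have b2': "before ([] @ w0 @ (C' @ wl)) y x" using b2 by simp
    have "before w0 x y" "before w0 y x"
      using before_R[OF _ b1'] before_R[OF _ b2'] dX dY 2 y0 by auto
    then show ?thesis using before_asym dw0 by metis
  next
    case 3
    have "y \<in> set (C @ wl)" using before_M[of w0 "C @ wl" x y] b1 dX 3 by simp
    moreover have "y \<notin> set wl"
    proof
      assume "y \<in> set wl"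
      then have "x \<in> set wl" using before_M[of "w0 @ C'" wl y x] b2 dY by simp
      then show False using 3 dX by auto
    qed
    ultimately have yC: "y \<in> set C" by auto
    have "before C x y" using before_R[OF dX b1] 3 yC by simp
    moreover have "before C' y x" using before_R[OF dY b2] 3 yC sC by simp
    ultimately show ?thesis using 3 yC by simp
  qed
qed

lemma in_concat_idx: "x \<in> set (concat L) \<Longrightarrow> \<exists>i<length L. x \<in> set (L ! i)"
proof -
  assume "x \<in> set (concat L)"
  then obtain w where w: "w \<in> set L" "x \<in> set w" by auto
  then obtain i where "i < length L" "L ! i = w" by (auto simp: in_set_conv_nth)
  then show ?thesis using w by blast
qed

lemma rev_idx: "i < length L \<Longrightarrow> x \<in> set (L ! i) \<Longrightarrow> x \<in> set (rev L ! (length L - Suc i))"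
  by (simp add: rev_nth)

lemma Lmain:
  assumes S: "SigM X Y" and dX: "distinct X" and i1: "before X x y" "before Y y x"
    and m: "before X y x' \<or> y = x'" and i2: "before X x' y'" "before Y y' x'"
  shows "before Y y' x"
proof -
  obtain w0 wl mid where ne: "\<forall>w\<in>set mid. w \<noteq> []" and
    X: "X = w0 @ concat mid @ wl" and Y: "Y = w0 @ concat (rev mid) @ wl"
    using S unfolding SigM_def by blast
  define C where "C = concat mid"
  define C' where "C' = concat (rev mid)"
  define d where "d = length mid"
  have sC: "set C' = set C" unfolding C_def C'_def by auto
  have dY: "distinct Y"
    using dist_perm[OF _ _ dX, of Y] X Y by (simp add: len_concat_rev)
  have dC: "distinct C" using dX X C_def by simp
  have dC': "distinct C'" using dY Y C'_def by simp
  have dX': "distinct (w0 @ C @ wl)" and dY': "distinct (w0 @ C' @ wl)" using dX dY X Y C_def C'_def by auto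
  have I1: "x \<in> set C \<and> y \<in> set C \<and> before C x y \<and> before C' y x"
    using inv_in_C[OF dX' dY' sC] i1 X Y C_def C'_def by simp
  have I2: "x' \<in> set C \<and> y' \<in> set C \<and> before C x' y' \<and> before C' y' x'"
    using inv_in_C[OF dX' dY' sC] i2 X Y C_def C'_def by simp
  have segs: "\<And>u v. before C u v \<Longrightarrow> before C' v u \<Longrightarrow> u \<in> set C \<Longrightarrow> v \<in> set C \<Longrightarrow>
      \<exists>i j. i < j \<and> j < d \<and> u \<in> set (mid ! i) \<and> v \<in> set (mid ! j)"
  proof -
    fix u v assume h: "before C u v" "before C' v u" "u \<in> set C" "v \<in> set C"
    have "u \<in> set (concat mid)" "v \<in> set (concat mid)" using h(3,4) unfolding C_def by auto
    then obtain i j where i: "i < d" "u \<in> set (mid ! i)" and j: "j < d" "v \<in> set (mid ! j)"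
      using in_concat_idx unfolding d_def by metis
    have "i \<le> j" using S2[of mid u v i j] dC h(1) i j unfolding C_def d_def by simp
    moreover have "i \<noteq> j"
    proof
      assume "i = j"
      then have "before (mid ! i) u v" using S5[of mid u v i] dC h(1) i j unfolding C_def d_def by simp
      moreover have "before (rev mid ! (d - Suc i)) v u"
      proof -
        have "u \<in> set (rev mid ! (d - Suc i))" "v \<in> set (rev mid ! (d - Suc i))"
          using rev_idx i j \<open>i = j\<close> unfolding d_def by auto
        moreover have "d - Suc i < length (rev mid)" using i d_def by simp
        ultimately show ?thesis using S5[of "rev mid" v u "d - Suc i"] dC' h(2) unfolding C'_def by simp
      qed
      moreover have "distinct (mid ! i)" using dC i C_def d_def concat_split by (metis distinct_append)
      ultimately show False using before_asym[of "mid ! i" u v] i d_def by (simp add: rev_nth)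
    qed
    ultimately show "\<exists>i j. i < j \<and> j < d \<and> u \<in> set (mid ! i) \<and> v \<in> set (mid ! j)" using i j
      by (intro exI[of _ i] exI[of _ j]) simp
  qed
  obtain i j where ij: "i < j" "j < d" "x \<in> set (mid ! i)" "y \<in> set (mid ! j)" using segs I1 by blast
  obtain i' j' where ij': "i' < j'" "j' < d" "x' \<in> set (mid ! i')" "y' \<in> set (mid ! j')" using segs I2 by blast
  have "j \<le> i'"
  proof (cases "y = x'")
    case True then show ?thesis using S1[of mid j i' y] dC ij ij' C_def d_def by simp
  next
    case False
    then have "before X y x'" using m by simp
    then have "before C y x'" using before_R[of w0 C wl y x'] dX' X C_def I1 I2 by simp
    then show ?thesis using S2[of mid y x' j i'] dC ij ij' C_def d_def by simp
  qed
  then have "d - Suc j' < d - Suc i" "d - Suc i < length (rev mid)" using ij ij' d_def by auto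
  then have "before C' y' x"
  proof -
    have "y' \<in> set (rev mid ! (d - Suc j'))" "x \<in> set (rev mid ! (d - Suc i))"
      using rev_idx[of j' mid y'] rev_idx[of i mid x] ij ij' unfolding d_def by auto
    then show ?thesis using S3[of "d - Suc j'" "d - Suc i" "rev mid" y' x] \<open>d - Suc j' < d - Suc i\<close>
      \<open>d - Suc i < length (rev mid)\<close> unfolding C'_def by simp
  qed
  then show ?thesis using Y C'_def before_appI1 before_appI2 by metis
qed

lemma two_idx: "2 \<le> length (filter P xs) \<Longrightarrow> \<exists>i j. i < j \<and> j < length xs \<and> P (xs ! i) \<and> P (xs ! j)"
proof (induction xs)
  case Nil then show ?case by simp
next
  case (Cons x xs)
  show ?case
  proof (cases "P x")
    case True
    then have "filter P xs \<noteq> []" using Cons.prems by auto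
    then obtain y where "y \<in> set xs" "P y" by (metis filter_False)
    then obtain j where "j < length xs" "xs ! j = y" by (metis in_set_conv_nth)
    then show ?thesis using True \<open>P y\<close> by (intro exI[of _ 0] exI[of _ "Suc j"]) simp
  next
    case False
    then obtain i j where "i < j \<and> j < length xs \<and> P (xs ! i) \<and> P (xs ! j)" using Cons by auto
    then show ?thesis by (intro exI[of _ "Suc i"] exI[of _ "Suc j"]) simp
  qed
qed

lemma pos_nth: "distinct r \<Longrightarrow> i < length r \<Longrightarrow> pos r (r ! i) = Suc i"
  unfolding pos_def by (rule arg_cong[where f=Suc], rule the_equality) (auto simp: nth_eq_iff_index_eq)

lemma pos_before: "i < j \<Longrightarrow> j < length r \<Longrightarrow> before r (r ! i) (r ! j)"
proof -
  assume h: "i < j" "j < length r"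
  have "r ! i \<in> set (take j r)" using h by (auto simp: in_set_conv_nth intro!: exI[of _ i])
  moreover have "r ! j \<in> set (drop j r)" using Cons_nth_drop_Suc[OF h(2), symmetric] by (metis list.set_intros(1))
  ultimately show ?thesis using before_appI3 by (metis append_take_drop_id)
qed

lemma pos_lt_before: "distinct r \<Longrightarrow> u \<in> set r \<Longrightarrow> v \<in> set r \<Longrightarrow> pos r u < pos r v \<Longrightarrow> before r u v"
proof -
  assume h: "distinct r" "u \<in> set r" "v \<in> set r" "pos r u < pos r v"
  obtain i where i: "i < length r" "r ! i = u" using h(2) by (metis in_set_conv_nth)
  obtain j where j: "j < length r" "r ! j = v" using h(3) by (metis in_set_conv_nth)
  have "i < j" using h(4) pos_nth[OF h(1) i(1)] pos_nth[OF h(1) j(1)] i j by simp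
  then show ?thesis using pos_before i j by metis
qed

lemma mid_before: "distinct (a # X @ [z]) \<Longrightarrow> u \<in> set X \<Longrightarrow> v \<in> set X \<Longrightarrow>
   pos (a # X @ [z]) u < pos (a # X @ [z]) v \<Longrightarrow> before X u v"
proof -
  assume h: "distinct (a # X @ [z])" "u \<in> set X" "v \<in> set X" "pos (a # X @ [z]) u < pos (a # X @ [z]) v"
  then have "before (a # X @ [z]) u v" using pos_lt_before by (metis Un_iff list.set_intros(2) set_append)
  then have "before ([a] @ X @ [z]) u v" by simp
  then show ?thesis using before_R h by (metis append_Cons append_Nil)
qed

lemma sigma_type1:
  assumes P: "p \<in> Sigma_set A" and W: "por_witness p ks"
  shows "type1 (block_sizes ks)"
proof (rule type1I, rule ccontr)
  assume "\<not> length (filter (\<lambda>x. x \<noteq> 1) (block_sizes ks)) \<le> 1"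
  then have "2 \<le> length (filter (\<lambda>x. x \<noteq> 1) (block_sizes ks))" by simp
  then obtain i j where ij: "i < j" "j < length (block_sizes ks)"
    "block_sizes ks ! i \<noteq> 1" "block_sizes ks ! j \<noteq> 1" using two_idx by blast
  define m where "m = length ks - 1"
  have lb: "length (block_sizes ks) = m" unfolding block_sizes_def m_def by simp
  have bsn: "\<And>t. t < m \<Longrightarrow> block_sizes ks ! t = ks ! (Suc t) - ks ! t"
    unfolding block_sizes_def m_def by simp
  obtain a z X Y where p: "p = (a # X @ [z], z # Y @ [a])" and S: "SigM X Y" and v: "valid_pair A p"
    using P sigma_iff by metis
  define r0 where "r0 = a # X @ [z]"
  define r1 where "r1 = z # Y @ [a]"
  define n where "n = length r0"
  have d0: "distinct r0" and d1: "distinct r1" and s01: "set r1 = set r0"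
    using v p unfolding valid_pair_def r0_def r1_def by auto
  have sXY: "set Y = set X" using d0 d1 s01 unfolding r0_def r1_def by auto
  have dX: "distinct X" and dY: "distinct Y" using d0 d1 unfolding r0_def r1_def by auto
  have ne: "ks \<noteq> []" and srt0: "sorted_wrt (<) ks" and hd2: "hd ks = 2" and lst: "last ks = n"
    using W p unfolding por_witness_def n_def r0_def by auto
  have srt: "\<And>u w. u < w \<Longrightarrow> w < length ks \<Longrightarrow> ks ! u < ks ! w"
    using srt0 sorted_wrt_nth_less by blast
  have mono: "\<And>u w. u \<le> w \<Longrightarrow> w < length ks \<Longrightarrow> ks ! u \<le> ks ! w"
    using srt by (metis le_eq_less_or_eq order.strict_implies_order)
  have k0: "ks ! 0 = 2" using hd2 ne by (simp add: hd_conv_nth)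
  have kl: "ks ! m = n" using lst ne unfolding m_def by (simp add: last_conv_nth)
  have blk: "\<And>t b. t < m \<Longrightarrow> b \<in> set r0 \<Longrightarrow> ks ! t \<le> pos r0 b \<Longrightarrow> pos r0 b < ks ! (Suc t) \<Longrightarrow>
      pos r0 b + pos r1 b = ks ! t + ks ! (Suc t) - 1"
  proof -
    fix t b assume h: "t < m" "b \<in> set r0" "ks ! t \<le> pos r0 b" "pos r0 b < ks ! (Suc t)"
    have "0 < Suc t \<and> Suc t < length ks" using h(1) unfolding m_def by simp
    then show "pos r0 b + pos r1 b = ks ! t + ks ! (Suc t) - 1"
      using W h p unfolding por_witness_def r0_def r1_def by fastforce
  qed
  have im: "i < m" "j < m" using ij lb by auto
  define k where "k = ks ! i"
  define K where "K = ks ! Suc i"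
  define k' where "k' = ks ! j"
  define K' where "K' = ks ! Suc j"
  have lt1: "k < K" "k' < K'" using srt im unfolding k_def K_def k'_def K'_def m_def by auto
  have g1: "k + 2 \<le> K" using lt1 ij(3) bsn im unfolding k_def K_def by fastforce
  have g2: "k' + 2 \<le> K'" using lt1 ij(4) bsn im unfolding k'_def K'_def by fastforce
  have Kk: "K \<le> k'" using mono[of "Suc i" j] ij im unfolding K_def k'_def m_def by simp
  have k2: "2 \<le> k" using mono[of 0 i] im k0 unfolding k_def m_def by simp
  have Kn: "K' \<le> n" using mono[of "Suc j" m] im kl unfolding K'_def m_def by simp
  have ln: "n = length X + 2" unfolding n_def r0_def by simp
  define x where "x = r0 ! (k - 1)"
  define y where "y = r0 ! k"
  define x' where "x' = r0 ! (k' - 1)"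
  define y' where "y' = r0 ! k'"
  have pk: "pos r0 x = k" "pos r0 y = Suc k" "pos r0 x' = k'" "pos r0 y' = Suc k'"
    using pos_nth[OF d0, of "k - 1"] pos_nth[OF d0, of k] pos_nth[OF d0, of "k' - 1"] pos_nth[OF d0, of k']
      g1 g2 Kk k2 Kn unfolding x_def y_def x'_def y'_def n_def by auto
  have ins: "x \<in> set r0" "y \<in> set r0" "x' \<in> set r0" "y' \<in> set r0"
    using g1 g2 Kk k2 Kn unfolding x_def y_def x'_def y'_def n_def by auto
  have p1: "pos r1 x = K - 1" "pos r1 y = K - 2" "pos r1 x' = K' - 1" "pos r1 y' = K' - 2"
    using blk[OF im(1) ins(1)] blk[OF im(1) ins(2)] blk[OF im(2) ins(3)] blk[OF im(2) ins(4)]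
      pk g1 g2 unfolding k_def K_def k'_def K'_def by auto
  have pa: "pos r0 a = 1" using pos_nth[OF d0, of 0] unfolding r0_def by simp
  have pz: "pos r0 z = n" using pos_nth[OF d0, of "n - 1"] unfolding r0_def n_def by (simp add: nth_append)
  have inX: "\<And>u. u \<in> set r0 \<Longrightarrow> 2 \<le> pos r0 u \<Longrightarrow> pos r0 u < n \<Longrightarrow> u \<in> set X"
  proof -
    fix u assume h: "u \<in> set r0" "2 \<le> pos r0 u" "pos r0 u < n"
    then have "u \<noteq> a" "u \<noteq> z" using pa pz by auto
    then show "u \<in> set X" using h(1) unfolding r0_def by auto
  qed
  have xs: "x \<in> set X" "y \<in> set X" "x' \<in> set X" "y' \<in> set X"
    using inX ins pk g1 g2 Kk k2 Kn by auto
  have b1: "before X x y" using mid_before[of a X z x y] d0 xs pk unfolding r0_def by simp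
  have b2: "before X y x'" using mid_before[of a X z y x'] d0 xs pk g1 Kk unfolding r0_def by simp
  have b3: "before X x' y'" using mid_before[of a X z x' y'] d0 xs pk unfolding r0_def by simp
  have c1: "before Y y x" using mid_before[of z Y a y x] d1 xs sXY p1 g1 unfolding r1_def by simp
  have c2: "before Y y' x'" using mid_before[of z Y a y' x'] d1 xs sXY p1 g2 unfolding r1_def by simp
  have c3: "before Y x y'" using mid_before[of z Y a x y'] d1 xs sXY p1 g1 g2 Kk unfolding r1_def by simp
  have "before Y y' x" using Lmain[OF S dX b1 c1 _ b3 c2] b2 by simp
  then show False using c3 before_asym dY by metis
qed


theorem lemma4p8:
  fixes A :: "'a set"
  assumes "finite A" and "card A \<ge> 2"
  shows "(\<forall>p q. p \<in> Sigma_set A \<and> inner_switch p q \<longrightarrow> q \<in> Sigma_set A) \<and>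
         (\<forall>p q. p \<in> Sigma_set A \<and> outer_switch_ab p q \<longrightarrow> q \<in> Sigma_set A) \<and>
         (\<forall>p q. p \<in> Sigma_set A \<and> outer_switch_bz p q \<longrightarrow> q \<in> Sigma_set A) \<and>
         (\<forall>p \<in> Sigma_set A. (\<exists>t. has_type t p) \<longrightarrow> has_type 1 p)"
proof (intro conjI allI impI ballI)
  fix p q assume "p \<in> Sigma_set A \<and> inner_switch p q"
  then show "q \<in> Sigma_set A" using inner_closed by blast
next
  fix p q assume "p \<in> Sigma_set A \<and> outer_switch_ab p q"
  then show "q \<in> Sigma_set A" using outer_ab_closed by blast
next
  fix p q assume "p \<in> Sigma_set A \<and> outer_switch_bz p q"
  then show "q \<in> Sigma_set A" using outer_bz_closed by blast
next
  fix p assume P: "p \<in> Sigma_set A" and "\<exists>t. has_type t p"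
  then obtain ks where W: "por_witness p ks" unfolding has_type_def by blast
  then show "has_type 1 p" using sigma_type1[OF P W] unfolding has_type_def by (auto simp: Let_def)
qed

end
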